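(* For the two-state-service-rate queue described in the context, assumed positive recurrent, the generating function $g$ satisfies, for all $|z|\le1$, $$u\,g(rz)=-(z-z^+)(z-z^-)\,g(z)-vz+w,$$ where $$z^\pm=\frac{1}{2\lambda}\Bigl(\mu_a+\mu_b+\lambda+\gamma\pm\sqrt{\Delta}\Bigr),\qquad \Delta=(\lambda-\gamma+\mu_a-\mu_b)^2+4\lambda\gamma,$$ and $$\lambda^2u=\lambda_a(\mu_a-\mu_b),\qquad \lambda^2v=(\lambda_a\mu_a+\lambda_b\mu_b)\pi_0,\qquad \lambda^2w=(\mu_a\mu_b+\lambda_a\mu_a+\lambda_b\mu_b+\gamma\mu_a)\pi_0.$$
   Context: Two-state-service-rate queue. Fix parameters $\lambda_a,\lambda_b>0$, $\delta>0$, $\gamma\ge0$, $\mu_a,\mu_b>0$. Set $\lambda=\lambda_a+\lambda_b$, $r=\lambda/(\lambda+\delta)$, and for $n\ge1$, $p_n=\frac{\lambda_a}{\lambda}r^n$ and $\bar p_n=1-p_n$. Consider the continuous-time Markov chain on the state space $\{0\}\cup\{(n,a),(n,b):n\ge1\}$ with the following transitions: from $0$ to $(1,a)$ at rate $\lambda_a$ and to $(1,b)$ at rate $\lambda_b$; for $n\ge1$ and $c\in\{a,b\}$, from $(n,c)$ to $(n+1,c)$ at rate $\lambda$; from $(1,c)$ to $0$ at rate $\mu_c$; for $n\ge1$ and $c\in\{a,b\}$, from $(n+1,c)$ to $(n,a)$ at rate $\mu_c p_n$ and to $(n,b)$ at rate $\mu_c\bar p_n$; for $n\ge1$, from $(n,b)$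 to $(n,a)$ at rate $\gamma$. When the chain is positive recurrent, $\pi$ denotes its stationary distribution and $\pi_0=\pi(0)$, $\pi_n^a=\pi((n,a))$, $\pi_n^b=\pi((n,b))$, $\pi_n=\pi_n^a+\pi_n^b$ for $n\ge1$. Generating functions: $g_a(z)=\sum_{n\ge1}\pi_n^az^n$, $g_b(z)=\sum_{n\ge1}\pi_n^bz^n$, $g(z)=\pi_0+g_a(z)+g_b(z)$. *)

theory Defs
  imports "HOL-Analysis.Analysis"
begin

text \<open>States of the chain: Empty is state 0, Qa n is (n,a), Qb n is (n,b);
  only n \<ge> 1 is a genuine state.\<close>
datatype st = Empty | Qa nat | Qb nat

definition states :: "st set" where
  "states = {Empty} \<union> {Qa n | n. n \<ge> 1} \<union> {Qb n | n. n \<ge> 1}"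

definition pr :: "real \<Rightarrow> real \<Rightarrow> real \<Rightarrow> nat \<Rightarrow> real" where
  "pr la lb d n = la / (la + lb) * ((la + lb) / (la + lb + d)) ^ n"

fun rate :: "real \<Rightarrow> real \<Rightarrow> real \<Rightarrow> real \<Rightarrow> real \<Rightarrow> real \<Rightarrow> st \<Rightarrow> st \<Rightarrow> real" where
  "rate la lb d g ma mb Empty Empty = 0"
| "rate la lb d g ma mb Empty (Qa m) = (if m = 1 then la else 0)"
| "rate la lb d g ma mb Empty (Qb m) = (if m = 1 then lb else 0)"
| "rate la lb d g ma mb (Qa n) Empty = (if n = 1 then ma else 0)"
| "rate la lb d g ma mb (Qb n) Empty = (if n = 1 then mb else 0)"
| "rate la lb d g ma mb (Qa n) (Qa m) =
     (if m = n + 1 then la + lb else 0) + (if n = m + 1 then ma * pr la lb d m else 0)"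
| "rate la lb d g ma mb (Qa n) (Qb m) =
     (if n = m + 1 then ma * (1 - pr la lb d m) else 0)"
| "rate la lb d g ma mb (Qb n) (Qb m) =
     (if m = n + 1 then la + lb else 0) + (if n = m + 1 then mb * (1 - pr la lb d m) else 0)"
| "rate la lb d g ma mb (Qb n) (Qa m) =
     (if n = m + 1 then mb * pr la lb d m else 0) + (if m = n then g else 0)"

definition stationary ::
  "real \<Rightarrow> real \<Rightarrow> real \<Rightarrow> real \<Rightarrow> real \<Rightarrow> real \<Rightarrow> (st \<Rightarrow> real) \<Rightarrow> bool" where
  "stationary la lb d g ma mb \<pi> \<longleftrightarrow>
     (\<forall>s\<in>states. \<pi> s \<ge> 0) \<and> (\<pi> has_sum 1) states \<and>
     (\<forall>j\<in>states. (\<Sum>\<^sub>\<infinity>i\<in>states. \<pi> i * rate la lb d g ma mb i j)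
                   = \<pi> j * (\<Sum>\<^sub>\<infinity>k\<in>states. rate la lb d g ma mb j k))"

definition gcoef :: "(st \<Rightarrow> real) \<Rightarrow> nat \<Rightarrow> real" where
  "gcoef \<pi> n = (if n = 0 then \<pi> Empty else \<pi> (Qa n) + \<pi> (Qb n))"

definition genfun :: "(st \<Rightarrow> real) \<Rightarrow> complex \<Rightarrow> complex" where
  "genfun \<pi> z = (\<Sum>n. complex_of_real (gcoef \<pi> n) * z ^ n)"

end

theory Submission
  imports Defs
begin

lemma infsum_states_fin:
  assumes "finite F" "F \<subseteq> states" "\<And>x. x \<in> states \<Longrightarrow> x \<notin> F \<Longrightarrow> f x = 0"
  shows "infsum f states = sum f F"
proof -
  have "infsum f states = infsum f F"
    by (rule infsum_cong_neutral) (use assms in auto)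
  then show ?thesis using assms(1) by simp
qed

lemma st_cases: "x \<in> states \<Longrightarrow> x = Empty \<or> (\<exists>m\<ge>1. x = Qa m) \<or> (\<exists>m\<ge>1. x = Qb m)"
  unfolding states_def by auto

lemma in_states[simp]: "Empty \<in> states" "Qa m \<in> states \<longleftrightarrow> m \<ge> 1" "Qb m \<in> states \<longleftrightarrow> m \<ge> 1"
  unfolding states_def by auto

lemma out_Empty: "infsum (rate la lb d g ma mb Empty) states = la + lb"
  by (subst infsum_states_fin[of "{Qa 1, Qb 1}"]) (auto dest!: st_cases split: if_splits simp: eval_nat_numeral)

lemma out_Qa: assumes "n \<ge> 1" shows "infsum (rate la lb d g ma mb (Qa n)) states = la + lb + ma"
proof (cases "n = 1")
  case True
  then show ?thesis
    by (subst infsum_states_fin[of "{Empty, Qa 2}"]) (auto dest!: st_cases split: if_splits simp: eval_nat_numeral)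
next
  case False
  then show ?thesis using assms
    by (subst infsum_states_fin[of "{Qa (n+1), Qa (n-1), Qb (n-1)}"]) (auto dest!: st_cases split: if_splits simp: algebra_simps eval_nat_numeral)
qed

lemma out_Qb: assumes "n \<ge> 1" shows "infsum (rate la lb d g ma mb (Qb n)) states = la + lb + mb + g"
proof (cases "n = 1")
  case True
  then show ?thesis
    by (subst infsum_states_fin[of "{Empty, Qb 2, Qa 1}"]) (auto dest!: st_cases split: if_splits simp: eval_nat_numeral)
next
  case False
  then show ?thesis using assms
    by (subst infsum_states_fin[of "{Qb (n+1), Qb (n-1), Qa (n-1), Qa n}"]) (auto dest!: st_cases split: if_splits simp: algebra_simps eval_nat_numeral)
qed

lemma in_Empty: "(\<Sum>\<^sub>\<infinity>i\<in>states. \<pi> i * rate la lb d g ma mb i Empty) = \<pi> (Qa 1) * ma + \<pi> (Qb 1) * mb"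
  by (subst infsum_states_fin[of "{Qa 1, Qb 1}"]) (auto dest!: st_cases split: if_splits simp: eval_nat_numeral)

lemma in_Qa: assumes "n \<ge> 1" shows "(\<Sum>\<^sub>\<infinity>i\<in>states. \<pi> i * rate la lb d g ma mb i (Qa n)) =
   (if n = 1 then la * \<pi> Empty else (la+lb) * \<pi> (Qa (n-1)))
   + pr la lb d n * (ma * \<pi> (Qa (n+1)) + mb * \<pi> (Qb (n+1))) + g * \<pi> (Qb n)"
proof (cases "n = 1")
  case True
  then show ?thesis
    by (subst infsum_states_fin[of "{Empty, Qa 2, Qb 2, Qb 1}"]) (auto dest!: st_cases split: if_splits simp: algebra_simps eval_nat_numeral)
next
  case False
  then show ?thesis using assms
    by (subst infsum_states_fin[of "{Qa (n-1), Qa (n+1), Qb (n+1), Qb n}"]) (auto dest!: st_cases split: if_splits simp: algebra_simps eval_nat_numeral)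
qed

lemma in_Qb: assumes "n \<ge> 1" shows "(\<Sum>\<^sub>\<infinity>i\<in>states. \<pi> i * rate la lb d g ma mb i (Qb n)) =
   (if n = 1 then lb * \<pi> Empty else (la+lb) * \<pi> (Qb (n-1)))
   + (1 - pr la lb d n) * (ma * \<pi> (Qa (n+1)) + mb * \<pi> (Qb (n+1)))"
proof (cases "n = 1")
  case True
  then show ?thesis
    by (subst infsum_states_fin[of "{Empty, Qb 2, Qa 2}"]) (auto dest!: st_cases split: if_splits simp: algebra_simps eval_nat_numeral)
next
  case False
  then show ?thesis using assms
    by (subst infsum_states_fin[of "{Qb (n-1), Qb (n+1), Qa (n+1)}"]) (auto dest!: st_cases split: if_splits simp: algebra_simps eval_nat_numeral)
qed


lemma key1:
  fixes ma mb l la lb p0 a b Gn R g :: real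
  assumes "ma*a+mb*b = l*p0" "Gn = a+b" "a*(l+ma) = la*p0 + R*Gn + g*b" "l = la+lb"
  shows "R*(ma-mb)*Gn = l*(ma+mb+l+g)*p0 - (l*mb+ma*mb+g*ma)*Gn - (la*ma+lb*mb)*p0"
  using assms by algebra

lemma key2:
  fixes ma mb l a b c e Gn G1 G2 R g :: real
  assumes "ma*a + mb*b = l*G1" "Gn = a+b" "ma*c+mb*e = l*G2" "G1 = c+e"
     "a*(l+ma) = l*c + R*Gn + g*b"
  shows "R*(ma-mb)*Gn = - (l^2*G2) + l*(ma+mb+l+g)*G1 - (l*mb+ma*mb+g*ma)*Gn"
  using assms by algebra

lemma shift_sums:
  fixes f :: "nat \<Rightarrow> complex"
  assumes "(\<lambda>n. f n * z^n) sums S"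
  shows "(\<lambda>n. (if n = 0 then 0 else f (n-1)) * z^n) sums (z*S)"
proof -
  have "(\<lambda>n. z * (f n * z^n)) sums (z*S)" using sums_mult[OF assms] .
  then have "(\<lambda>n. (\<lambda>n. (if n = 0 then 0 else f (n-1)) * z^n) (Suc n)) sums (z*S)"
    by (simp add: algebra_simps)
  then show ?thesis by (subst (asm) sums_Suc_iff) simp
qed

lemma summable_part:
  fixes \<pi> :: "st \<Rightarrow> real" and Q :: "nat \<Rightarrow> st"
  assumes "\<pi> summable_on states" "\<And>s. s \<in> states \<Longrightarrow> \<pi> s \<ge> 0" "inj Q" "\<And>n. n \<ge> 1 \<Longrightarrow> Q n \<in> states"
  shows "summable (\<lambda>n. if n = 0 then 0 else \<pi> (Q n))"
proof -
  have "\<pi> summable_on (Q ` {1..})"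
    by (rule summable_on_subset_banach[OF assms(1)]) (use assms(4) in auto)
  then have "(\<pi> \<circ> Q) summable_on {1..}"
    using summable_on_reindex[of Q "{1..}" \<pi>] assms(3) by (simp add: inj_on_def inj_def)
  then have "(\<lambda>n. if n = 0 then 0 else \<pi> (Q n)) summable_on UNIV"
    by (rule summable_on_cong_neutral[THEN iffD1, rotated -1]) auto
  then show ?thesis
    by (subst (asm) summable_on_UNIV_nonneg_real_iff) (use assms(2,4) in auto)
qed


lemma lin1:
  fixes a b ma mb l p0 la lb p C g :: real
  assumes "a*ma+b*mb = l*p0" "a*(la+lb+ma) = la*p0 + p*C + g*b" "b*(la+lb+mb+g) = lb*p0 + (1-p)*C" "l = la+lb"
  shows "C = l*(a+b)"
  using assms by algebra

lemma balance: "stationary la lb d g ma mb \<pi> \<Longrightarrow> j \<in> states \<Longrightarrow>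
  (\<Sum>\<^sub>\<infinity>i\<in>states. \<pi> i * rate la lb d g ma mb i j) = \<pi> j * (\<Sum>\<^sub>\<infinity>k\<in>states. rate la lb d g ma mb j k)"
  unfolding stationary_def by blast

lemma telescope:
  assumes st: "stationary la lb d g ma mb \<pi>" and "n \<ge> 1"
  shows "ma * \<pi> (Qa n) + mb * \<pi> (Qb n) = (la+lb) * gcoef \<pi> (n-1)"
  using assms(2)
proof (induction n rule: dec_induct)
  case base
  have "\<pi> Empty * (la+lb) = \<pi> (Qa 1) * ma + \<pi> (Qb 1) * mb"
    using balance[OF st, of Empty] in_Empty[of \<pi>] out_Empty[of la lb] by simp
  then show ?case by (simp add: gcoef_def algebra_simps)
next
  case (step n)
  have ea: "\<pi> (Qa n) * (la+lb+ma) = (if n = 1 then la * \<pi> Empty else (la+lb) * \<pi> (Qa (n-1)))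
   + pr la lb d n * (ma * \<pi> (Qa (n+1)) + mb * \<pi> (Qb (n+1))) + g * \<pi> (Qb n)"
    using balance[OF st, of "Qa n"] step(1) in_Qa[of n \<pi>] out_Qa[of n la lb] by simp
  have eb: "\<pi> (Qb n) * (la+lb+mb+g) = (if n = 1 then lb * \<pi> Empty else (la+lb) * \<pi> (Qb (n-1)))
   + (1 - pr la lb d n) * (ma * \<pi> (Qa (n+1)) + mb * \<pi> (Qb (n+1)))"
    using balance[OF st, of "Qb n"] step(1) in_Qb[of n \<pi>] out_Qb[of n la lb d g] by simp
  have "ma * \<pi> (Qa (n+1)) + mb * \<pi> (Qb (n+1)) = (la+lb) * (\<pi> (Qa n) + \<pi> (Qb n))"
  proof (cases "n = 1")
    case True
    then have "\<pi> (Qa 1) * ma + \<pi> (Qb 1) * mb = (la+lb) * \<pi> Empty" using step(3) by (simp add: gcoef_def algebra_simps)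
    then show ?thesis using ea eb True lin1 by simp
  next
    case False
    then have "\<pi> (Qa n) * ma + \<pi> (Qb n) * mb = (la+lb) * (\<pi> (Qa (n-1)) + \<pi> (Qb (n-1)))" using step(1,3) by (simp add: gcoef_def algebra_simps)
    then show ?thesis using ea eb False lin1[of "\<pi> (Qa n)" ma "\<pi> (Qb n)" mb "la+lb" "\<pi> (Qa (n-1)) + \<pi> (Qb (n-1))" "la+lb" 0] by (simp add: algebra_simps)
  qed
  then show ?case using step(1) by (simp add: gcoef_def)
qed


lemma coef_id:
  assumes pos: "la > 0" "lb > 0" "d > 0" and st: "stationary la lb d g ma mb \<pi>"
    and hu: "(la + lb)^2 * u = la * (ma - mb)"
    and hv: "(la + lb)^2 * v = (la * ma + lb * mb) * \<pi> Empty"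
    and hw: "(la + lb)^2 * w = (ma * mb + la * ma + lb * mb + g * ma) * \<pi> Empty"
  shows "u * ((la+lb)/(la+lb+d))^n * gcoef \<pi> n =
     - (if n \<ge> 2 then gcoef \<pi> (n-2) else 0)
     + (ma+mb+(la+lb)+g)/(la+lb) * (if n \<ge> 1 then gcoef \<pi> (n-1) else 0)
     - ((la+lb)*mb+ma*mb+g*ma)/(la+lb)^2 * gcoef \<pi> n
     - (if n = 1 then v else 0) + (if n = 0 then w else 0)"
proof -
  define l where "l = la + lb"
  define R where "R = la * ((la+lb)/(la+lb+d))^n"
  have l0: "l > 0" using pos by (simp add: l_def)
  have lpr: "l * pr la lb d n = R" using l0 by (simp add: pr_def R_def l_def)
  have C: "\<And>k. k \<ge> 1 \<Longrightarrow> ma * \<pi> (Qa k) + mb * \<pi> (Qb k) = l * gcoef \<pi> (k-1)"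
    using telescope[OF st] by (simp add: l_def)
  have G: "\<And>k. k \<ge> 1 \<Longrightarrow> gcoef \<pi> k = \<pi> (Qa k) + \<pi> (Qb k)" by (simp add: gcoef_def)
  have ea: "n \<ge> 1 \<Longrightarrow> \<pi> (Qa n) * (l+ma) = (if n = 1 then la * \<pi> Empty else l * \<pi> (Qa (n-1)))
     + R * gcoef \<pi> n + g * \<pi> (Qb n)"
  proof -
    assume n: "n \<ge> 1"
    have "\<pi> (Qa n) * (la+lb+ma) = (if n = 1 then la * \<pi> Empty else (la+lb) * \<pi> (Qa (n-1)))
      + pr la lb d n * (ma * \<pi> (Qa (n+1)) + mb * \<pi> (Qb (n+1))) + g * \<pi> (Qb n)"
      using balance[OF st, of "Qa n"] n in_Qa[of n \<pi>] out_Qa[of n la lb] by simp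
    moreover have "pr la lb d n * (ma * \<pi> (Qa (n+1)) + mb * \<pi> (Qb (n+1))) = R * gcoef \<pi> n"
      using C[of "n+1"] lpr by (simp add: algebra_simps)
    ultimately show ?thesis by (simp add: l_def)
  qed
  have main: "R*(ma-mb)*gcoef \<pi> n = 
      - (l^2) * (if n \<ge> 2 then gcoef \<pi> (n-2) else 0)
     + l*(ma+mb+l+g) * (if n \<ge> 1 then gcoef \<pi> (n-1) else 0)
     - (l*mb+ma*mb+g*ma) * gcoef \<pi> n
     - (if n = 1 then (la * ma + lb * mb) * \<pi> Empty else 0)
     + (if n = 0 then (ma * mb + la * ma + lb * mb + g * ma) * \<pi> Empty else 0)"
  proof (cases "n = 0")
    case True
    then show ?thesis by (simp add: R_def l_def gcoef_def algebra_simps)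
  next
    case False
    show ?thesis
    proof (cases "n = 1")
      case True
      have "R*(ma-mb)*gcoef \<pi> n = l*(ma+mb+l+g)*\<pi> Empty - (l*mb+ma*mb+g*ma)*gcoef \<pi> n - (la*ma+lb*mb)*\<pi> Empty"
        by (rule key1[where a="\<pi> (Qa 1)" and b="\<pi> (Qb 1)" and la=la and lb=lb])
           (use C[of 1] G[of 1] ea True in \<open>auto simp: l_def gcoef_def\<close>)
      then show ?thesis using True by (simp add: gcoef_def)
    next
      case False2: False
      have n2: "n \<ge> 2" using False False2 by simp
      have "R*(ma-mb)*gcoef \<pi> n = - (l^2*gcoef \<pi> (n-2)) + l*(ma+mb+l+g)*gcoef \<pi> (n-1) - (l*mb+ma*mb+g*ma)*gcoef \<pi> n"
        apply (rule key2[where a="\<pi> (Qa n)" and b="\<pi> (Qb n)" and c="\<pi> (Qa (n-1))" and e="\<pi> (Qb (n-1))"])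
        using C[of n] G[of n] C[of "n-1"] G[of "n-1"] ea n2 by (auto simp: numeral_2_eq_2)
      then show ?thesis using n2 by simp
    qed
  qed
  have "l^2 * (u * ((la+lb)/(la+lb+d))^n * gcoef \<pi> n) = ((la+lb)^2 * u) * ((la+lb)/(la+lb+d))^n * gcoef \<pi> n"
    by (simp add: l_def)
  also have "\<dots> = R*(ma-mb)*gcoef \<pi> n"
    unfolding hu R_def by (simp add: algebra_simps)
  also note main
  also have "- (l^2) * (if n \<ge> 2 then gcoef \<pi> (n-2) else 0)
     + l*(ma+mb+l+g) * (if n \<ge> 1 then gcoef \<pi> (n-1) else 0)
     - (l*mb+ma*mb+g*ma) * gcoef \<pi> n
     - (if n = 1 then (la * ma + lb * mb) * \<pi> Empty else 0)
     + (if n = 0 then (ma * mb + la * ma + lb * mb + g * ma) * \<pi> Empty else 0)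
     = l^2 * (- (if n \<ge> 2 then gcoef \<pi> (n-2) else 0)
     + (ma+mb+(la+lb)+g)/(la+lb) * (if n \<ge> 1 then gcoef \<pi> (n-1) else 0)
     - ((la+lb)*mb+ma*mb+g*ma)/(la+lb)^2 * gcoef \<pi> n
     - (if n = 1 then v else 0) + (if n = 0 then w else 0))"
    using hv hw l0 unfolding l_def[symmetric] by (simp add: field_simps power2_eq_square)
  finally show ?thesis using l0 by simp
qed


lemma gen_sums:
  assumes st: "stationary la lb d g ma mb \<pi>" and w: "cmod w \<le> 1"
  shows "(\<lambda>n. complex_of_real (gcoef \<pi> n) * w^n) sums genfun \<pi> w"
proof -
  have nn: "\<And>s. s \<in> states \<Longrightarrow> \<pi> s \<ge> 0" and hs: "\<pi> summable_on states"
    using st unfolding stationary_def by (auto simp: summable_on_def)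
  have sA: "summable (\<lambda>n. if n = 0 then 0 else \<pi> (Qa n))"
    by (rule summable_part[OF hs nn]) (auto simp: inj_def)
  have sB: "summable (\<lambda>n. if n = 0 then 0 else \<pi> (Qb n))"
    by (rule summable_part[OF hs nn]) (auto simp: inj_def)
  have "summable (\<lambda>n. (\<lambda>n. if n = 0 then 0 else \<pi> (Qa n)) (Suc n) + (\<lambda>n. if n = 0 then 0 else \<pi> (Qb n)) (Suc n))"
    using summable_add[OF sA[THEN summable_Suc_iff[THEN iffD2]] sB[THEN summable_Suc_iff[THEN iffD2]]] .
  then have "summable (\<lambda>n. gcoef \<pi> (Suc n))" by (simp add: gcoef_def)
  then have sG: "summable (gcoef \<pi>)" by (simp add: summable_Suc_iff)
  have G0: "\<And>n. gcoef \<pi> n \<ge> 0" using nn by (simp add: gcoef_def)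
  have "summable (\<lambda>n. complex_of_real (gcoef \<pi> n) * w^n)"
  proof (rule summable_comparison_test[OF _ sG])
    show "\<exists>N. \<forall>n\<ge>N. norm (complex_of_real (gcoef \<pi> n) * w ^ n) \<le> gcoef \<pi> n"
    proof (intro exI allI impI)
      fix n
      have "norm (complex_of_real (gcoef \<pi> n) * w ^ n) = gcoef \<pi> n * cmod w ^ n"
        using G0[of n] by (simp add: norm_mult norm_power)
      also have "\<dots> \<le> gcoef \<pi> n * 1"
        by (rule mult_left_mono[OF _ G0]) (use w in \<open>simp add: power_le_one\<close>)
      finally show "norm (complex_of_real (gcoef \<pi> n) * w ^ n) \<le> gcoef \<pi> n" by simp
    qed
  qed
  then show ?thesis unfolding genfun_def by (rule summable_sums)
qed

theorem proposition2:
  fixes la lb d g ma mb u v w :: real and \<pi> :: "st \<Rightarrow> real" and z :: complex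
  assumes "la > 0" "lb > 0" "d > 0" "g \<ge> 0" "ma > 0" "mb > 0"
    and "stationary la lb d g ma mb \<pi>"
    and "(la + lb)^2 * u = la * (ma - mb)"
    and "(la + lb)^2 * v = (la * ma + lb * mb) * \<pi> Empty"
    and "(la + lb)^2 * w = (ma * mb + la * ma + lb * mb + g * ma) * \<pi> Empty"
    and "cmod z \<le> 1"
  shows "let l = la + lb; r = l / (l + d);
             \<Delta> = (l - g + ma - mb)^2 + 4 * l * g;
             zp = (ma + mb + l + g + sqrt \<Delta>) / (2 * l);
             zm = (ma + mb + l + g - sqrt \<Delta>) / (2 * l)
         in complex_of_real u * genfun \<pi> (complex_of_real r * z)
            = - (z - complex_of_real zp) * (z - complex_of_real zm) * genfun \<pi> z
              - complex_of_real v * z + complex_of_real w"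
proof -
  note st = assms(7)
  define l where "l = la + lb"
  define r where "r = l / (l + d)"
  define \<Delta> where "\<Delta> = (l - g + ma - mb)^2 + 4 * l * g"
  define zp where "zp = (ma + mb + l + g + sqrt \<Delta>) / (2 * l)"
  define zm where "zm = (ma + mb + l + g - sqrt \<Delta>) / (2 * l)"
  define s where "s = (ma+mb+(la+lb)+g)/(la+lb)"
  define P where "P = ((la+lb)*mb+ma*mb+g*ma)/(la+lb)^2"
  define Z where "Z = genfun \<pi> z"
  define Gc where "Gc = (\<lambda>n. complex_of_real (gcoef \<pi> n))"
  have l0: "l > 0" using assms by (simp add: l_def)
  have r0: "0 < r" "r < 1" using l0 assms(3) by (auto simp: r_def)
  have D0: "\<Delta> \<ge> 0" using l0 assms(4) by (simp add: \<Delta>_def)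
  have "zp + zm = (ma+mb+l+g)/l" using l0 unfolding zp_def zm_def by (simp add: field_simps)
  then have zsum: "zp + zm = s" by (simp add: s_def l_def)
  have "zp * zm = ((ma + mb + l + g)^2 - (sqrt \<Delta>)^2) / (4 * l^2)"
    unfolding zp_def zm_def by (simp add: field_simps power2_eq_square)
  also have "\<dots> = ((ma + mb + l + g)^2 - \<Delta>) / (4 * l^2)" using D0 by simp
  also have "\<dots> = P" unfolding P_def \<Delta>_def l_def[symmetric] using l0
    by (simp add: field_simps power2_eq_square)
  finally have zprod: "zp * zm = P" .
  have rz: "cmod (complex_of_real r * z) \<le> 1"
    using r0 assms(11) by (simp add: norm_mult mult_le_one)
  have S1: "(\<lambda>n. Gc n * z^n) sums Z" unfolding Gc_def Z_def by (rule gen_sums[OF st assms(11)])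
  have S2: "(\<lambda>n. (if n = 0 then 0 else Gc (n-1)) * z^n) sums (z*Z)" by (rule shift_sums[OF S1])
  have S3: "(\<lambda>n. (if n = 0 then 0 else (if n - 1 = 0 then 0 else Gc (n-1-1))) * z^n) sums (z*(z*Z))"
    by (rule shift_sums[OF S2])
  have S4: "(\<lambda>n. if n = 1 then complex_of_real v * z^n else 0) sums (complex_of_real v * z^1)"
    by (rule sums_single)
  have S5: "(\<lambda>n. if n = 0 then complex_of_real w * z^n else 0) sums (complex_of_real w * z^0)"
    by (rule sums_single)
  have SR: "(\<lambda>n. - ((if n = 0 then 0 else (if n - 1 = 0 then 0 else Gc (n-1-1))) * z^n)
      + complex_of_real s * ((if n = 0 then 0 else Gc (n-1)) * z^n)
      - complex_of_real P * (Gc n * z^n)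
      - (if n = 1 then complex_of_real v * z^n else 0)
      + (if n = 0 then complex_of_real w * z^n else 0))
     sums (- (z*(z*Z)) + complex_of_real s * (z*Z) - complex_of_real P * Z - complex_of_real v * z^1 + complex_of_real w * z^0)"
    by (intro sums_add sums_diff sums_minus sums_mult S1 S2 S3 S4 S5)
  have SL: "(\<lambda>n. complex_of_real u * (Gc n * (complex_of_real r * z)^n)) sums (complex_of_real u * genfun \<pi> (complex_of_real r * z))"
    unfolding Gc_def by (rule sums_mult[OF gen_sums[OF st rz]])
  have eqn: "complex_of_real u * (Gc n * (complex_of_real r * z)^n) =
      - ((if n = 0 then 0 else (if n - 1 = 0 then 0 else Gc (n-1-1))) * z^n)
      + complex_of_real s * ((if n = 0 then 0 else Gc (n-1)) * z^n)
      - complex_of_real P * (Gc n * z^n)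
      - (if n = 1 then complex_of_real v * z^n else 0)
      + (if n = 0 then complex_of_real w * z^n else 0)" for n
  proof -
    have c: "u * r^n * gcoef \<pi> n =
     - (if n \<ge> 2 then gcoef \<pi> (n-2) else 0)
     + s * (if n \<ge> 1 then gcoef \<pi> (n-1) else 0)
     - P * gcoef \<pi> n
     - (if n = 1 then v else 0) + (if n = 0 then w else 0)"
      using coef_id[OF assms(1,2,3) st assms(8,9,10), of n] by (simp add: r_def l_def s_def P_def)
    have E0: "complex_of_real u * (Gc n * (complex_of_real r * z)^n) = complex_of_real (u * r^n * gcoef \<pi> n) * z^n"
      by (simp add: Gc_def power_mult_distrib)
    note E = E0[unfolded c]
    show ?thesis
    proof (cases n)
      case 0 then show ?thesis using E by (simp add: Gc_def algebra_simps)
    next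
      case (Suc m)
      then show ?thesis using E by (cases m) (simp_all add: Gc_def algebra_simps)
    qed
  qed
  have "complex_of_real u * genfun \<pi> (complex_of_real r * z) =
     - (z*(z*Z)) + complex_of_real s * (z*Z) - complex_of_real P * Z - complex_of_real v * z^1 + complex_of_real w * z^0"
    using sums_unique2[OF SL[unfolded eqn] SR] .
  also have "\<dots> = - (z - complex_of_real zp) * (z - complex_of_real zm) * Z - complex_of_real v * z + complex_of_real w"
  proof -
    have "(z - complex_of_real zp) * (z - complex_of_real zm) = z*z - complex_of_real (zp+zm) * z + complex_of_real (zp*zm)"
      by (simp add: algebra_simps)
    also have "\<dots> = z*z - complex_of_real s * z + complex_of_real P" using zsum zprod by simp
    finally have F: "(z - complex_of_real zp) * (z - complex_of_real zm) = z*z - complex_of_real s * z + complex_of_real P" .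
    have "- (z - complex_of_real zp) * (z - complex_of_real zm) * Z = - ((z - complex_of_real zp) * (z - complex_of_real zm)) * Z" by (simp only: minus_mult_left)
    then show ?thesis unfolding F by (simp add: algebra_simps)
  qed
  finally show ?thesis unfolding Let_def Z_def zp_def zm_def \<Delta>_def r_def l_def by simp
qed

end
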